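(* Let $L,R$ be nonempty subsets of a group $G$ and $s\in G$, and consider $2\mathrm{S}(G;L,R)$. (1) There exist words $w_{L,m}$ and $w_{L,n}$ in $L$ with $m\neq n$ such that $w_{L,m}s\sim w_{L,n}s$ if and only if there exists a word $w_{L,k}$ in $L$ of positive length with $w_{L,k}s\sim s$; moreover one can take $k=|m-n|$. (2) For $n\ge1$, there exists a word $w_{L,n}$ in $L$ with $w_{L,n}s\sim s$ if and only if there exists a word $w_{L^{-1},n}$ in $L^{-1}$ with $w_{L^{-1},n}s\sim s$. (3) If $g\in\langle L\rangle s\langle R\rangle$ and $k\ge 1$, then $w_{L,k}g\sim g$ for some word $w_{L,k}$ in $L$ of length $k$ if and only if $w'_{L,k}s\sim s$ for some word $w'_{L,k}$ in $L$ of length $k$.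
   Context: For nonempty subsets $L,R$ of a group $G$, the two-sided group digraph $2\mathrm{S}(G;L,R)$ has vertex set $G$ and a directed arc $(g,h)$ if and only if $h=l^{-1}gr$ for some $l\in L$, $r\in R$. $w_{S,n}$ denotes the value of a word $s_1\cdots s_n$ with $s_i\in S$. $g\sim h$ means $g$ is weakly connected to $h$: there is a sequence $g=g_0,\dots,g_n=h$ with, for each $i$, $(g_{i-1},g_i)$ or $(g_i,g_{i-1})$ an arc. $\langle S\rangle$ is the subgroup generated by $S$. *)

theory Defs
  imports "HOL-Algebra.Algebra"
begin

text \<open>Arc of the two-sided group digraph 2S(G;L,R): (g,h) is an arc iff h = l^-1 g r.\<close>
definition tsarc :: "('a, 'b) monoid_scheme \<Rightarrow> 'a set \<Rightarrow> 'a set \<Rightarrow> 'a \<Rightarrow> 'a \<Rightarrow> bool" where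
  "tsarc G L R g h \<longleftrightarrow> g \<in> carrier G \<and> h \<in> carrier G \<and>
     (\<exists>l\<in>L. \<exists>r\<in>R. h = inv\<^bsub>G\<^esub> l \<otimes>\<^bsub>G\<^esub> g \<otimes>\<^bsub>G\<^esub> r)"

definition weakly_conn :: "('a, 'b) monoid_scheme \<Rightarrow> 'a set \<Rightarrow> 'a set \<Rightarrow> 'a \<Rightarrow> 'a \<Rightarrow> bool" where
  "weakly_conn G L R g h \<longleftrightarrow>
     (\<lambda>x y. tsarc G L R x y \<or> tsarc G L R y x)\<^sup>*\<^sup>* g h"

definition word_val :: "('a, 'b) monoid_scheme \<Rightarrow> 'a list \<Rightarrow> 'a" where
  "word_val G ws = foldr (\<lambda>x y. x \<otimes>\<^bsub>G\<^esub> y) ws \<one>\<^bsub>G\<^esub>"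

definition is_word :: "'a set \<Rightarrow> nat \<Rightarrow> 'a list \<Rightarrow> bool" where
  "is_word S n ws \<longleftrightarrow> length ws = n \<and> set ws \<subseteq> S"

end

theory Submission
  imports Defs
begin

locale tsd = group G for G (structure) +
  fixes L R :: "'a set"
  assumes Lc: "L \<subseteq> carrier G" and Rc: "R \<subseteq> carrier G"
    and Lne: "L \<noteq> {}" and Rne: "R \<noteq> {}"
begin

lemma invc1[simp]: "x \<in> carrier G \<Longrightarrow> y \<in> carrier G \<Longrightarrow> inv x \<otimes> (x \<otimes> y) = y"
  by (simp add: m_assoc[symmetric])
lemma invc2[simp]: "x \<in> carrier G \<Longrightarrow> y \<in> carrier G \<Longrightarrow> x \<otimes> (inv x \<otimes> y) = y"
  by (simp add: m_assoc[symmetric])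

abbreviation conn where "conn \<equiv> weakly_conn G L R"

lemma conn_refl: "conn x x"
  unfolding weakly_conn_def by simp

lemma conn_sym: "conn x y \<Longrightarrow> conn y x"
  unfolding weakly_conn_def
proof (induction rule: rtranclp_induct)
  case base then show ?case by simp
next
  case (step y z)
  then have "(\<lambda>x y. tsarc G L R x y \<or> tsarc G L R y x) z y" by blast
  then show ?case using step(3)
    converse_rtranclp_into_rtranclp[of "\<lambda>x y. tsarc G L R x y \<or> tsarc G L R y x" z y x] by blast
qed

lemma conn_trans: "conn x y \<Longrightarrow> conn y z \<Longrightarrow> conn x z"
  unfolding weakly_conn_def by simp

lemma arc_conn: "x \<in> carrier G \<Longrightarrow> l \<in> L \<Longrightarrow> r \<in> R \<Longrightarrow> y = inv l \<otimes> x \<otimes> r \<Longrightarrow> conn x y"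
  unfolding weakly_conn_def tsarc_def
  using Lc Rc by (intro r_into_rtranclp) auto

lemma arc_conn': "x \<in> carrier G \<Longrightarrow> l \<in> L \<Longrightarrow> r \<in> R \<Longrightarrow> y = inv l \<otimes> x \<otimes> r \<Longrightarrow> conn y x"
  using arc_conn conn_sym by blast

lemma conn_carrier: "conn x y \<Longrightarrow> x \<in> carrier G \<Longrightarrow> y \<in> carrier G"
  unfolding weakly_conn_def
  by (induction rule: rtranclp_induct) (auto simp: tsarc_def)

lemma Lin: "l \<in> L \<Longrightarrow> l \<in> carrier G" using Lc by auto
lemma Rin: "r \<in> R \<Longrightarrow> r \<in> carrier G" using Rc by auto

lemma A1: assumes "g \<in> carrier G" "l1 \<in> L" "l2 \<in> L" shows "conn g (inv l1 \<otimes> l2 \<otimes> g)"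
proof -
  obtain r where r: "r \<in> R" using Rne by auto
  note c = Lin[OF assms(2)] Lin[OF assms(3)] Rin[OF r] assms(1)
  define z where "z = l2 \<otimes> g \<otimes> inv r"
  have "conn z g" by (rule arc_conn[OF _ assms(3) r]) (use c in \<open>simp_all add: z_def m_assoc\<close>)
  moreover have "conn z (inv l1 \<otimes> l2 \<otimes> g)"
    by (rule arc_conn[OF _ assms(2) r]) (use c in \<open>simp_all add: z_def m_assoc\<close>)
  ultimately show ?thesis by (meson conn_sym conn_trans)
qed

lemma A2: assumes "g \<in> carrier G" "l1 \<in> L" "l2 \<in> L" shows "conn g (l2 \<otimes> inv l1 \<otimes> g)"
proof -
  obtain r where r: "r \<in> R" using Rne by auto
  note c = Lin[OF assms(2)] Lin[OF assms(3)] Rin[OF r] assms(1)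
  define z where "z = inv l1 \<otimes> g \<otimes> r"
  have "conn g z" by (rule arc_conn[OF _ assms(2) r]) (use c in \<open>simp_all add: z_def m_assoc\<close>)
  moreover have "conn (l2 \<otimes> inv l1 \<otimes> g) z"
    by (rule arc_conn[OF _ assms(3) r]) (use c in \<open>simp_all add: z_def m_assoc\<close>)
  ultimately show ?thesis by (meson conn_sym conn_trans)
qed

lemma A3: assumes "h \<in> carrier G" "r1 \<in> R" "r2 \<in> R" shows "conn h (h \<otimes> inv r1 \<otimes> r2)"
proof -
  obtain l where l: "l \<in> L" using Lne by auto
  note c = Rin[OF assms(2)] Rin[OF assms(3)] Lin[OF l] assms(1)
  define z where "z = l \<otimes> h \<otimes> inv r1"
  have "conn z h" by (rule arc_conn[OF _ l assms(2)]) (use c in \<open>simp_all add: z_def m_assoc\<close>)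
  moreover have "conn z (h \<otimes> inv r1 \<otimes> r2)"
    by (rule arc_conn[OF _ l assms(3)]) (use c in \<open>simp_all add: z_def m_assoc\<close>)
  ultimately show ?thesis by (meson conn_sym conn_trans)
qed

lemma A4: assumes "h \<in> carrier G" "r1 \<in> R" "r2 \<in> R" shows "conn h (h \<otimes> r1 \<otimes> inv r2)"
proof -
  obtain l where l: "l \<in> L" using Lne by auto
  note c = Rin[OF assms(2)] Rin[OF assms(3)] Lin[OF l] assms(1)
  define z where "z = inv l \<otimes> h \<otimes> r1"
  have "conn h z" by (rule arc_conn[OF _ l assms(2)]) (use c in \<open>simp_all add: z_def m_assoc\<close>)
  moreover have "conn (h \<otimes> r1 \<otimes> inv r2) z"
    by (rule arc_conn[OF _ l assms(3)]) (use c in \<open>simp_all add: z_def m_assoc\<close>)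
  ultimately show ?thesis by (meson conn_sym conn_trans)
qed

lemma conn_map:
  assumes "\<And>a b. tsarc G L R a b \<Longrightarrow> conn (f a) (f b)" and "conn x y"
  shows "conn (f x) (f y)"
  using assms(2) unfolding weakly_conn_def[of G L R x y]
proof (induction rule: rtranclp_induct)
  case base then show ?case by (rule conn_refl)
next
  case (step y z)
  then show ?case using assms(1) conn_sym conn_trans by blast
qed

lemma tsarcE:
  assumes "tsarc G L R a b"
  obtains l r where "a \<in> carrier G" "l \<in> L" "r \<in> R" "b = inv l \<otimes> a \<otimes> r"
  using assms unfolding tsarc_def by blast

lemma B_left: assumes "l \<in> L" "conn x y" shows "conn (l \<otimes> x) (l \<otimes> y)"
proof (rule conn_map[OF _ assms(2)])
  fix a b assume "tsarc G L R a b"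
  then obtain l' r where h: "a \<in> carrier G" "l' \<in> L" "r \<in> R" "b = inv l' \<otimes> a \<otimes> r"
    by (rule tsarcE)
  note c = Lin[OF assms(1)] Lin[OF h(2)] Rin[OF h(3)] h(1)
  have "conn (l \<otimes> a) (a \<otimes> r)"
    by (rule arc_conn[OF _ assms(1) h(3)]) (use c in \<open>simp_all add: m_assoc\<close>)
  moreover have "conn (a \<otimes> r) (l \<otimes> inv l' \<otimes> (a \<otimes> r))"
    by (rule A2) (use c h assms in auto)
  ultimately show "conn (l \<otimes> a) (l \<otimes> b)" using c h(4) by (simp add: m_assoc conn_trans)
qed

lemma B_left_inv: assumes "l \<in> L" "conn x y" shows "conn (inv l \<otimes> x) (inv l \<otimes> y)"
proof (rule conn_map[OF _ assms(2)])
  fix a b assume "tsarc G L R a b"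
  then obtain l' r where h: "a \<in> carrier G" "l' \<in> L" "r \<in> R" "b = inv l' \<otimes> a \<otimes> r"
    by (rule tsarcE)
  note c = Lin[OF assms(1)] Lin[OF h(2)] Rin[OF h(3)] h(1)
  have "conn (inv l \<otimes> a) (inv l' \<otimes> l \<otimes> (inv l \<otimes> a))"
    by (rule A1) (use c h assms in auto)
  moreover have "conn (inv l' \<otimes> a) (inv l \<otimes> b)"
    by (rule arc_conn[OF _ assms(1) h(3)]) (use c h in \<open>simp_all add: m_assoc\<close>)
  ultimately show "conn (inv l \<otimes> a) (inv l \<otimes> b)" using c by (simp add: m_assoc conn_trans)
qed

lemma B_right: assumes "r \<in> R" "conn x y" shows "conn (x \<otimes> r) (y \<otimes> r)"
proof (rule conn_map[OF _ assms(2)])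
  fix a b assume "tsarc G L R a b"
  then obtain l' r' where h: "a \<in> carrier G" "l' \<in> L" "r' \<in> R" "b = inv l' \<otimes> a \<otimes> r'"
    by (rule tsarcE)
  note c = Rin[OF assms(1)] Lin[OF h(2)] Rin[OF h(3)] h(1)
  have "conn (a \<otimes> r) (a \<otimes> r \<otimes> inv r \<otimes> r')"
    by (rule A3) (use c h assms in auto)
  moreover have "conn (a \<otimes> r') (b \<otimes> r)"
    by (rule arc_conn[OF _ h(2) assms(1)]) (use c h in \<open>simp_all add: m_assoc\<close>)
  ultimately show "conn (a \<otimes> r) (b \<otimes> r)" using c by (simp add: m_assoc conn_trans)
qed

lemma B_right_inv: assumes "r \<in> R" "conn x y" shows "conn (x \<otimes> inv r) (y \<otimes> inv r)"
proof (rule conn_map[OF _ assms(2)])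
  fix a b assume "tsarc G L R a b"
  then obtain l' r' where h: "a \<in> carrier G" "l' \<in> L" "r' \<in> R" "b = inv l' \<otimes> a \<otimes> r'"
    by (rule tsarcE)
  note c = Rin[OF assms(1)] Lin[OF h(2)] Rin[OF h(3)] h(1)
  define h' where "h' = inv l' \<otimes> (a \<otimes> inv r) \<otimes> r'"
  have hc: "h' \<in> carrier G" using c by (simp add: h'_def)
  have 1: "conn (a \<otimes> inv r) h'"
    by (rule arc_conn[OF _ h(2) h(3)]) (use c h in \<open>simp_all add: h'_def\<close>)
  have 2: "conn h' (h' \<otimes> inv r' \<otimes> r)"
    by (rule A3) (use c h hc assms in auto)
  have 3: "conn (h' \<otimes> inv r' \<otimes> r) (h' \<otimes> inv r' \<otimes> r \<otimes> r' \<otimes> inv r)"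
    by (rule A4) (use c h hc assms in auto)
  have "h' \<otimes> inv r' \<otimes> r \<otimes> r' \<otimes> inv r = b \<otimes> inv r"
    using c h by (simp add: h'_def m_assoc)
  then show "conn (a \<otimes> inv r) (b \<otimes> inv r)" using 1 2 3 conn_trans by metis
qed

definition LP where "LP a \<longleftrightarrow> a \<in> carrier G \<and> (\<forall>x y. x \<in> carrier G \<longrightarrow> conn x y \<longrightarrow> conn (a \<otimes> x) (a \<otimes> y))"
definition RP where "RP a \<longleftrightarrow> a \<in> carrier G \<and> (\<forall>x y. x \<in> carrier G \<longrightarrow> conn x y \<longrightarrow> conn (x \<otimes> a) (y \<otimes> a))"

lemma LP_gen: "a \<in> generate G L \<Longrightarrow> LP a"
proof (induction rule: generate.induct)
  case one then show ?case using conn_carrier by (auto simp: LP_def)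
next
  case (incl h) then show ?case using B_left Lin by (auto simp: LP_def)
next
  case (inv h) then show ?case using B_left_inv Lin by (auto simp: LP_def)
next
  case (eng h1 h2)
  then show ?case unfolding LP_def
  proof (intro conjI allI impI)
    fix x y assume "conn x y" "x \<in> carrier G"
    then have "y \<in> carrier G" using conn_carrier by blast
    then have "conn (h1 \<otimes> (h2 \<otimes> x)) (h1 \<otimes> (h2 \<otimes> y))"
      using eng \<open>conn x y\<close> \<open>x \<in> carrier G\<close> unfolding LP_def by blast
    then show "conn (h1 \<otimes> h2 \<otimes> x) (h1 \<otimes> h2 \<otimes> y)"
      using eng \<open>y \<in> carrier G\<close> \<open>x \<in> carrier G\<close> by (simp add: LP_def m_assoc)
  qed (use eng in \<open>auto simp: LP_def\<close>)
qed

lemma RP_gen: "a \<in> generate G R \<Longrightarrow> RP a"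
proof (induction rule: generate.induct)
  case one then show ?case using conn_carrier by (auto simp: RP_def)
next
  case (incl h) then show ?case using B_right Rin by (auto simp: RP_def)
next
  case (inv h) then show ?case using B_right_inv Rin by (auto simp: RP_def)
next
  case (eng h1 h2)
  then show ?case unfolding RP_def
  proof (intro conjI allI impI)
    fix x y assume "conn x y" "x \<in> carrier G"
    then have "y \<in> carrier G" using conn_carrier by blast
    have "conn (x \<otimes> h1) (y \<otimes> h1)"
      using eng \<open>conn x y\<close> \<open>x \<in> carrier G\<close> unfolding RP_def by blast
    moreover have "x \<otimes> h1 \<in> carrier G" using eng \<open>x \<in> carrier G\<close> by (simp add: RP_def)
    ultimately have "conn (x \<otimes> h1 \<otimes> h2) (y \<otimes> h1 \<otimes> h2)"
      using eng unfolding RP_def by blast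
    then show "conn (x \<otimes> (h1 \<otimes> h2)) (y \<otimes> (h1 \<otimes> h2))"
      using eng \<open>y \<in> carrier G\<close> \<open>x \<in> carrier G\<close> by (simp add: RP_def m_assoc)
  qed (use eng in \<open>auto simp: RP_def\<close>)
qed

lemma genL_sub: "subgroup (generate G L) G" by (rule generate_is_subgroup[OF Lc])
lemma genR_sub: "subgroup (generate G R) G" by (rule generate_is_subgroup[OF Rc])

lemma genL_inv: "a \<in> generate G L \<Longrightarrow> inv a \<in> generate G L"
  by (rule subgroup.m_inv_closed[OF genL_sub])
lemma genR_inv: "a \<in> generate G R \<Longrightarrow> inv a \<in> generate G R"
  by (rule subgroup.m_inv_closed[OF genR_sub])
lemma genL_carrier: "a \<in> generate G L \<Longrightarrow> a \<in> carrier G"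
  by (rule subgroup.mem_carrier[OF genL_sub])
lemma genR_carrier: "a \<in> generate G R \<Longrightarrow> a \<in> carrier G"
  by (rule subgroup.mem_carrier[OF genR_sub])

lemma L_cancel: assumes "a \<in> generate G L" "x \<in> carrier G" "y \<in> carrier G"
  shows "conn (a \<otimes> x) (a \<otimes> y) \<longleftrightarrow> conn x y"
proof
  assume "conn (a \<otimes> x) (a \<otimes> y)"
  moreover have "a \<otimes> x \<in> carrier G" using assms genL_carrier by blast
  ultimately have "conn (inv a \<otimes> (a \<otimes> x)) (inv a \<otimes> (a \<otimes> y))"
    using LP_gen[OF genL_inv[OF assms(1)]] unfolding LP_def by blast
  then show "conn x y" using assms genL_carrier by simp
qed (use LP_gen[OF assms(1)] assms in \<open>simp add: LP_def\<close>)

lemma R_cancel: assumes "a \<in> generate G R" "x \<in> carrier G" "y \<in> carrier G"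
  shows "conn (x \<otimes> a) (y \<otimes> a) \<longleftrightarrow> conn x y"
proof
  assume "conn (x \<otimes> a) (y \<otimes> a)"
  moreover have "x \<otimes> a \<in> carrier G" using assms genR_carrier by blast
  ultimately have "conn (x \<otimes> a \<otimes> inv a) (y \<otimes> a \<otimes> inv a)"
    using RP_gen[OF genR_inv[OF assms(1)]] unfolding RP_def by blast
  then show "conn x y" using assms genR_carrier by (simp add: m_assoc)
qed (use RP_gen[OF assms(1)] assms in \<open>simp add: RP_def\<close>)

lemma wv_cons[simp]: "word_val G (a # ws) = a \<otimes> word_val G ws"
  by (simp add: word_val_def)
lemma wv_nil[simp]: "word_val G [] = \<one>"
  by (simp add: word_val_def)
lemma wv_carrier: "set ws \<subseteq> carrier G \<Longrightarrow> word_val G ws \<in> carrier G"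
  by (induction ws) auto
lemma wv_append: "set ws \<subseteq> carrier G \<Longrightarrow> set vs \<subseteq> carrier G \<Longrightarrow>
   word_val G (ws @ vs) = word_val G ws \<otimes> word_val G vs"
  by (induction ws) (auto simp: wv_carrier m_assoc)
lemma wv_rev_inv: "set ws \<subseteq> carrier G \<Longrightarrow> word_val G (rev (map (\<lambda>x. inv x) ws)) = inv (word_val G ws)"
proof (induction ws)
  case (Cons a ws)
  have s: "set (rev (map (\<lambda>x. inv x) ws)) \<subseteq> carrier G" using Cons.prems by auto
  have "word_val G (rev (map (\<lambda>x. inv x) (a # ws))) = word_val G (rev (map (\<lambda>x. inv x) ws)) \<otimes> word_val G [inv a]"
    using wv_append[OF s, of "[inv a]"] Cons.prems by simp
  then show ?case using Cons wv_carrier by (simp add: inv_mult_group)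
qed simp
lemma wv_gen: "set ws \<subseteq> generate G L \<Longrightarrow> word_val G ws \<in> generate G L"
  by (induction ws) (auto intro: generate.intros)

lemma D: "is_word L k u \<Longrightarrow> is_word L k u' \<Longrightarrow> h \<in> carrier G \<Longrightarrow>
   conn (word_val G u \<otimes> h) (word_val G u' \<otimes> h)"
proof (induction u arbitrary: k u')
  case Nil then show ?case by (simp add: is_word_def conn_refl)
next
  case (Cons a u)
  then obtain b u2 where u': "u' = b # u2" by (cases u') (auto simp: is_word_def)
  have w1: "is_word L (k - 1) u" "is_word L (k - 1) u2"
    using Cons.prems u' by (auto simp: is_word_def)
  have ab: "a \<in> L" "b \<in> L" using Cons.prems u' by (auto simp: is_word_def)
  have sc: "set u \<subseteq> carrier G" "set u2 \<subseteq> carrier G" using w1 Lc by (auto simp: is_word_def)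
  have X: "word_val G u2 \<otimes> h \<in> carrier G" using sc Cons.prems wv_carrier by blast
  have "conn (a \<otimes> (word_val G u \<otimes> h)) (a \<otimes> (word_val G u2 \<otimes> h))"
    using B_left[OF ab(1) Cons.IH[OF w1 Cons.prems(3)]] .
  moreover have "conn (a \<otimes> (word_val G u2 \<otimes> h)) (b \<otimes> inv a \<otimes> (a \<otimes> (word_val G u2 \<otimes> h)))"
    by (rule A2) (use X ab Lin in auto)
  ultimately show ?case using u' sc X ab Lin Cons.prems wv_carrier
    by (simp add: m_assoc conn_trans)
qed

lemma commute1: "a \<in> generate G L \<Longrightarrow> l \<in> L \<Longrightarrow> h \<in> carrier G \<Longrightarrow>
   conn (l \<otimes> (a \<otimes> h)) (a \<otimes> (l \<otimes> h))"
proof (induction arbitrary: h rule: generate.induct)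
  case one then show ?case using Lin by (simp add: conn_refl)
next
  case (incl l')
  have "conn (word_val G [l, l'] \<otimes> h) (word_val G [l', l] \<otimes> h)"
    by (rule D[of 2]) (use incl in \<open>auto simp: is_word_def\<close>)
  then show ?case using incl Lin by (simp add: m_assoc)
next
  case (inv l')
  have "conn h (l \<otimes> inv l' \<otimes> h)" by (rule A2) (use inv in auto)
  moreover have "conn h (inv l' \<otimes> l \<otimes> h)" by (rule A1) (use inv in auto)
  ultimately show ?case using inv Lin by (simp add: m_assoc) (meson conn_sym conn_trans)
next
  case (eng h1 h2)
  have c: "h1 \<in> carrier G" "h2 \<in> carrier G" "l \<in> carrier G"
    using eng genL_carrier Lin by auto
  have "conn (l \<otimes> (h1 \<otimes> (h2 \<otimes> h))) (h1 \<otimes> (l \<otimes> (h2 \<otimes> h)))"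
    using eng c by simp
  moreover have "conn (h1 \<otimes> (l \<otimes> (h2 \<otimes> h))) (h1 \<otimes> (h2 \<otimes> (l \<otimes> h)))"
    using LP_gen[OF eng(1)] eng c by (simp add: LP_def)
  ultimately have "conn (l \<otimes> (h1 \<otimes> (h2 \<otimes> h))) (h1 \<otimes> (h2 \<otimes> (l \<otimes> h)))" by (rule conn_trans)
  then show ?case using c eng by (simp add: m_assoc)
qed

lemma commuteW: "is_word L k w \<Longrightarrow> a \<in> generate G L \<Longrightarrow> h \<in> carrier G \<Longrightarrow>
   conn (word_val G w \<otimes> (a \<otimes> h)) (a \<otimes> (word_val G w \<otimes> h))"
proof (induction w arbitrary: k h)
  case Nil then show ?case using genL_carrier by (simp add: conn_refl)
next
  case (Cons l w)
  have w: "is_word L (k - 1) w" "l \<in> L" using Cons.prems by (auto simp: is_word_def)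
  have sc: "set w \<subseteq> carrier G" using w Lc by (auto simp: is_word_def)
  have c: "a \<in> carrier G" "l \<in> carrier G" "word_val G w \<in> carrier G"
    using Cons.prems genL_carrier Lin w sc wv_carrier by auto
  have "conn (l \<otimes> (word_val G w \<otimes> (a \<otimes> h))) (l \<otimes> (a \<otimes> (word_val G w \<otimes> h)))"
    using B_left[OF w(2) Cons.IH[OF w(1) Cons.prems(2,3)]] .
  moreover have "conn (l \<otimes> (a \<otimes> (word_val G w \<otimes> h))) (a \<otimes> (l \<otimes> (word_val G w \<otimes> h)))"
    by (rule commute1) (use w Cons.prems c in auto)
  ultimately show ?case using c Cons.prems by (simp add: m_assoc conn_trans)
qed

lemma word_carrier: "is_word L k w \<Longrightarrow> set w \<subseteq> carrier G"
  using Lc by (auto simp: is_word_def)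

lemma word_gen: "is_word L k w \<Longrightarrow> word_val G w \<in> generate G L"
  by (rule wv_gen) (auto simp: is_word_def intro: generate.incl)

lemma part1: assumes "is_word L m ws" "is_word L n vs" "m \<le> n" "s \<in> carrier G"
  "conn (word_val G ws \<otimes> s) (word_val G vs \<otimes> s)"
  shows "\<exists>us. is_word L (n - m) us \<and> conn (word_val G us \<otimes> s) s"
proof -
  define p where "p = take m vs"
  define q where "q = drop m vs"
  have vs: "vs = p @ q" by (simp add: p_def q_def)
  have wp: "is_word L m p" "is_word L (n - m) q" using assms(2,3)
    by (auto simp: p_def q_def is_word_def dest: in_set_takeD in_set_dropD)
  have cp: "set p \<subseteq> carrier G" "set q \<subseteq> carrier G"
    using word_carrier wp by auto
  have 1: "conn (word_val G p \<otimes> s) (word_val G ws \<otimes> s)"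
    by (rule D[OF wp(1) assms(1) assms(4)])
  have "word_val G vs \<otimes> s = word_val G p \<otimes> (word_val G q \<otimes> s)"
    using vs cp wv_carrier assms(4) by (simp add: wv_append m_assoc)
  then have "conn (word_val G p \<otimes> s) (word_val G p \<otimes> (word_val G q \<otimes> s))"
    using conn_trans[OF 1 assms(5)] by simp
  then have "conn s (word_val G q \<otimes> s)"
    using L_cancel[OF word_gen[OF wp(1)] assms(4)] wv_carrier cp assms(4) by blast
  then show ?thesis using wp(2) conn_sym by blast
qed

lemma part3: assumes "a \<in> generate G L" "b \<in> generate G R" "s \<in> carrier G" "is_word L k w"
  shows "conn (word_val G w \<otimes> (a \<otimes> s \<otimes> b)) (a \<otimes> s \<otimes> b) \<longleftrightarrow> conn (word_val G w \<otimes> s) s"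
proof -
  have c: "a \<in> carrier G" "b \<in> carrier G" "word_val G w \<in> carrier G"
    using assms genL_carrier genR_carrier wv_carrier word_carrier by auto
  have "conn (word_val G w \<otimes> (a \<otimes> s \<otimes> b)) (a \<otimes> s \<otimes> b) \<longleftrightarrow>
        conn (word_val G w \<otimes> (a \<otimes> s)) (a \<otimes> s)"
    using R_cancel[OF assms(2), of "word_val G w \<otimes> (a \<otimes> s)" "a \<otimes> s"] c assms(3)
    by (simp add: m_assoc)
  also have "\<dots> \<longleftrightarrow> conn (a \<otimes> (word_val G w \<otimes> s)) (a \<otimes> s)"
  proof -
    have "conn (word_val G w \<otimes> (a \<otimes> s)) (a \<otimes> (word_val G w \<otimes> s))"
      by (rule commuteW[OF assms(4,1,3)])
    then show ?thesis using conn_sym conn_trans by blast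
  qed
  also have "\<dots> \<longleftrightarrow> conn (word_val G w \<otimes> s) s"
    using L_cancel[OF assms(1)] c assms(3) by simp
  finally show ?thesis .
qed

lemma part2a: assumes "is_word L n ws" "s \<in> carrier G" "conn (word_val G ws \<otimes> s) s"
  shows "is_word ((\<lambda>x. inv x) ` L) n (rev (map (\<lambda>x. inv x) ws)) \<and>
         conn (word_val G (rev (map (\<lambda>x. inv x) ws)) \<otimes> s) s"
proof
  show "is_word ((\<lambda>x. inv x) ` L) n (rev (map (\<lambda>x. inv x) ws))"
    using assms(1) by (auto simp: is_word_def)
  have c: "word_val G ws \<in> carrier G" using assms(1) word_carrier wv_carrier by blast
  have "conn (inv (word_val G ws) \<otimes> (word_val G ws \<otimes> s)) (inv (word_val G ws) \<otimes> s)"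
    using LP_gen[OF genL_inv[OF word_gen[OF assms(1)]]] assms c unfolding LP_def by blast
  then show "conn (word_val G (rev (map (\<lambda>x. inv x) ws)) \<otimes> s) s"
    using c assms word_carrier wv_rev_inv conn_sym by (simp add: wv_rev_inv[OF word_carrier[OF assms(1)]])
qed

lemma part2b: assumes "is_word ((\<lambda>x. inv x) ` L) n vs" "s \<in> carrier G" "conn (word_val G vs \<otimes> s) s"
  shows "is_word L n (rev (map (\<lambda>x. inv x) vs)) \<and>
         conn (word_val G (rev (map (\<lambda>x. inv x) vs)) \<otimes> s) s"
proof
  show "is_word L n (rev (map (\<lambda>x. inv x) vs))"
  proof -
    have "\<And>x. x \<in> set vs \<Longrightarrow> inv x \<in> L"
    proof -
      fix x assume "x \<in> set vs"
      then obtain l where "l \<in> L" "x = inv l" using assms(1) by (auto simp: is_word_def)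
      then show "inv x \<in> L" using Lin by simp
    qed
    then show ?thesis using assms(1) by (auto simp: is_word_def)
  qed
  have sc: "set vs \<subseteq> carrier G" using assms(1) Lc by (auto simp: is_word_def)
  have c: "word_val G vs \<in> carrier G" using sc wv_carrier by blast
  have g: "word_val G vs \<in> generate G L"
    by (rule wv_gen) (use assms(1) in \<open>auto simp: is_word_def intro: generate.inv\<close>)
  have "conn (inv (word_val G vs) \<otimes> (word_val G vs \<otimes> s)) (inv (word_val G vs) \<otimes> s)"
    using LP_gen[OF genL_inv[OF g]] assms c unfolding LP_def by blast
  then show "conn (word_val G (rev (map (\<lambda>x. inv x) vs)) \<otimes> s) s"
    using c assms conn_sym by (simp add: wv_rev_inv[OF sc])
qed

end

theorem mainTheorem15:
  fixes G (structure) and L R :: "'a set" and s :: 'a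
  assumes "group G" and "L \<subseteq> carrier G" and "R \<subseteq> carrier G"
    and "L \<noteq> {}" and "R \<noteq> {}" and "s \<in> carrier G"
  shows
    "((\<exists>m n ws vs. m \<noteq> n \<and> is_word L m ws \<and> is_word L n vs \<and>
         weakly_conn G L R (word_val G ws \<otimes> s) (word_val G vs \<otimes> s))
      \<longleftrightarrow> (\<exists>k us. k > 0 \<and> is_word L k us \<and> weakly_conn G L R (word_val G us \<otimes> s) s))
     \<and> (\<forall>m n ws vs. m \<noteq> n \<and> is_word L m ws \<and> is_word L n vs \<and>
         weakly_conn G L R (word_val G ws \<otimes> s) (word_val G vs \<otimes> s)
         \<longrightarrow> (\<exists>us. is_word L (if m \<le> n then n - m else m - n) us \<and>
                   weakly_conn G L R (word_val G us \<otimes> s) s))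
     \<and> (\<forall>n \<ge> 1. (\<exists>ws. is_word L n ws \<and> weakly_conn G L R (word_val G ws \<otimes> s) s)
         \<longleftrightarrow> (\<exists>ws. is_word ((\<lambda>x. inv x) ` L) n ws \<and> weakly_conn G L R (word_val G ws \<otimes> s) s))
     \<and> (\<forall>g k. g \<in> {a \<otimes> s \<otimes> b | a b. a \<in> generate G L \<and> b \<in> generate G R} \<and> k \<ge> 1 \<longrightarrow>
         ((\<exists>ws. is_word L k ws \<and> weakly_conn G L R (word_val G ws \<otimes> g) g)
          \<longleftrightarrow> (\<exists>ws. is_word L k ws \<and> weakly_conn G L R (word_val G ws \<otimes> s) s)))"
proof -
  interpret T: tsd G L R using assms by (simp add: tsd_def tsd_axioms_def)
  have P2: "\<forall>m n ws vs. m \<noteq> n \<and> is_word L m ws \<and> is_word L n vs \<and>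
         weakly_conn G L R (word_val G ws \<otimes> s) (word_val G vs \<otimes> s)
         \<longrightarrow> (\<exists>us. is_word L (if m \<le> n then n - m else m - n) us \<and>
                   weakly_conn G L R (word_val G us \<otimes> s) s)"
  proof (intro allI impI)
    fix m n ws vs assume h: "m \<noteq> n \<and> is_word L m ws \<and> is_word L n vs \<and>
         weakly_conn G L R (word_val G ws \<otimes> s) (word_val G vs \<otimes> s)"
    show "\<exists>us. is_word L (if m \<le> n then n - m else m - n) us \<and>
                   weakly_conn G L R (word_val G us \<otimes> s) s"
    proof (cases "m \<le> n")
      case True then show ?thesis using T.part1[of m ws n vs s] h assms(6) by simp
    next
      case False then show ?thesis using T.part1[of n vs m ws s] h assms(6) T.conn_sym by simp
    qed
  qed
  have P1: "(\<exists>m n ws vs. m \<noteq> n \<and> is_word L m ws \<and> is_word L n vs \<and>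
         weakly_conn G L R (word_val G ws \<otimes> s) (word_val G vs \<otimes> s))
      \<longleftrightarrow> (\<exists>k us. k > 0 \<and> is_word L k us \<and> weakly_conn G L R (word_val G us \<otimes> s) s)"
  proof
    assume "\<exists>m n ws vs. m \<noteq> n \<and> is_word L m ws \<and> is_word L n vs \<and>
         weakly_conn G L R (word_val G ws \<otimes> s) (word_val G vs \<otimes> s)"
    then obtain m n ws vs where h: "m \<noteq> n \<and> is_word L m ws \<and> is_word L n vs \<and>
         weakly_conn G L R (word_val G ws \<otimes> s) (word_val G vs \<otimes> s)" by blast
    then obtain us where "is_word L (if m \<le> n then n - m else m - n) us \<and>
                   weakly_conn G L R (word_val G us \<otimes> s) s" using P2 by blast
    moreover have "(if m \<le> n then n - m else m - n) > 0" using h by auto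
    ultimately show "\<exists>k us. k > 0 \<and> is_word L k us \<and> weakly_conn G L R (word_val G us \<otimes> s) s"
      by blast
  next
    assume "\<exists>k us. k > 0 \<and> is_word L k us \<and> weakly_conn G L R (word_val G us \<otimes> s) s"
    then obtain k us where h: "k > 0" "is_word L k us" "weakly_conn G L R (word_val G us \<otimes> s) s"
      by blast
    have "is_word L 0 []" by (simp add: is_word_def)
    moreover have "weakly_conn G L R (word_val G us \<otimes> s) (word_val G [] \<otimes> s)"
      using h(3) assms(6) by simp
    ultimately show "\<exists>m n ws vs. m \<noteq> n \<and> is_word L m ws \<and> is_word L n vs \<and>
         weakly_conn G L R (word_val G ws \<otimes> s) (word_val G vs \<otimes> s)"
      using h by (metis less_not_refl)
  qed
  have P3: "\<forall>n \<ge> 1. (\<exists>ws. is_word L n ws \<and> weakly_conn G L R (word_val G ws \<otimes> s) s)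
         \<longleftrightarrow> (\<exists>ws. is_word ((\<lambda>x. inv x) ` L) n ws \<and> weakly_conn G L R (word_val G ws \<otimes> s) s)"
    using T.part2a T.part2b assms(6) by blast
  have P4: "\<forall>g k. g \<in> {a \<otimes> s \<otimes> b | a b. a \<in> generate G L \<and> b \<in> generate G R} \<and> k \<ge> 1 \<longrightarrow>
         ((\<exists>ws. is_word L k ws \<and> weakly_conn G L R (word_val G ws \<otimes> g) g)
          \<longleftrightarrow> (\<exists>ws. is_word L k ws \<and> weakly_conn G L R (word_val G ws \<otimes> s) s))"
  proof (intro allI impI)
    fix g and k :: nat assume "g \<in> {a \<otimes> s \<otimes> b | a b. a \<in> generate G L \<and> b \<in> generate G R} \<and> k \<ge> 1"
    then obtain a b where ab: "g = a \<otimes> s \<otimes> b" "a \<in> generate G L" "b \<in> generate G R" by blast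
    show "(\<exists>ws. is_word L k ws \<and> weakly_conn G L R (word_val G ws \<otimes> g) g)
          \<longleftrightarrow> (\<exists>ws. is_word L k ws \<and> weakly_conn G L R (word_val G ws \<otimes> s) s)"
      using T.part3[OF ab(2,3) assms(6)] ab(1) by blast
  qed
  show ?thesis using P1 P2 P3 P4 by blast
qed

end
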